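(* Let $\alpha\in(0,1)$, $\eta>0$, and run the generalized share algorithm with the projection mixing rule $\hat p_{t+1}\in\arg\min_{x\in\Delta_d^\alpha}\mathcal K(x,v_{t+1})$. Then for all $t\ge1$, all loss sequences in $[0,1]^d$, and all $q_t\in\Delta_d^\alpha$, \[ (\hat p_t-q_t)^\top\ell_t\le\frac1\eta\sum_{i=1}^d q_{i,t}\ln\frac{\hat p_{i,t+1}}{\hat p_{i,t}}+\frac\eta8 . \]
   Context: Let $d\ge1$ and $\Delta_d=\{q\in[0,1]^d:\sum_{i=1}^d q_i=1\}$. The generalized share algorithm with learning rate $\eta>0$ and mixing functions $\psi_t:[0,1]^{td}\to\Delta_d$ ($t\ge2$) works as follows: $\hat p_1=v_1=(1/d,\dots,1/d)$. At each round $t=1,2,\dots$ it predicts $\hat p_t=(\hat p_{1,t},\dots,\hat p_{d,t})\in\Delta_d$, observes a loss vector $\ell_t=(\ell_{1,t},\dots,\ell_{d,t})\in[0,1]^d$ (arbitrary), and suffers loss $\hat p_t^\top\ell_t$. It then forms the pre-weights $v_{j,t+1}=\hat p_{j,t}e^{-\eta\ell_{j,t}}/\sum_{i=1}^d\hat p_{i,t}e^{-\eta\ell_{i,t}}$ for $j=1,\dots,d$, sets $v_{t+1}=(v_{1,t+1},\dots,v_{d,t+1})$, and defines $\hat p_{t+1}=\psi_{t+1}(V_{t+1})$ where $V_{t+1}=[v_{i,s}]_{1\le i\le d,1\le s\le t+1}$ is the $d\times(t+1)$ matrix of all pre-weights so far. Here $\Delta_d^\alpha=[\alpha/d,1]^d\cap\Delta_d$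 and $\mathcal K(x,v)=\sum_{i=1}^d x_i\ln(x_i/v_i)$ is the Kullback–Leibler divergence. *)

theory Defs
  imports Complex_Main
begin

text \<open>Vectors in R^d are represented as functions nat \<Rightarrow> real, using coordinates 0..d-1.\<close>

definition simplex :: "nat \<Rightarrow> (nat \<Rightarrow> real) set" where
  "simplex d = {x. (\<forall>i<d. 0 \<le> x i \<and> x i \<le> 1) \<and> (\<Sum>i<d. x i) = 1}"

definition simplex_alpha :: "real \<Rightarrow> nat \<Rightarrow> (nat \<Rightarrow> real) set" where
  "simplex_alpha \<alpha> d = {x \<in> simplex d. \<forall>i<d. \<alpha> / real d \<le> x i \<and> x i \<le> 1}"

definition KL :: "nat \<Rightarrow> (nat \<Rightarrow> real) \<Rightarrow> (nat \<Rightarrow> real) \<Rightarrow> real" where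
  "KL d x v = (\<Sum>i<d. x i * ln (x i / v i))"

definition share_update :: "nat \<Rightarrow> real \<Rightarrow> (nat \<Rightarrow> real) \<Rightarrow> (nat \<Rightarrow> real) \<Rightarrow> (nat \<Rightarrow> real)" where
  "share_update d \<eta> p l = (\<lambda>j. p j * exp (- \<eta> * l j) / (\<Sum>i<d. p i * exp (- \<eta> * l i)))"

end

theory Submission
  imports Defs "HOL-Probability.Hoeffding"
begin

lemma hoeff:
  fixes d :: nat and \<eta> :: real and p l :: "nat \<Rightarrow> real"
  assumes eta: "\<eta> > 0" and lb: "\<And>i. i < d \<Longrightarrow> 0 \<le> l i \<and> l i \<le> 1"
    and pn: "\<And>i. i < d \<Longrightarrow> 0 \<le> p i" and ps: "(\<Sum>i<d. p i) = 1"
  shows "ln (\<Sum>i<d. p i * exp (- \<eta> * l i)) \<le> - \<eta> * (\<Sum>i<d. p i * l i) + \<eta>^2 / 8"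
proof -
  define m where "m = (\<Sum>i<d. p i * (1 - l i))"
  have m0: "m \<ge> 0" unfolding m_def using pn lb by (intro sum_nonneg) auto
  have mm: "m = 1 - (\<Sum>i<d. p i * l i)"
    unfolding m_def by (simp add: algebra_simps sum_subtractf ps)
  have pt: "exp (- \<eta> * l i) \<le> exp (-\<eta>) * (1 + (1 - l i) * (exp \<eta> - 1))" if i: "i < d" for i
  proof -
    have c: "exp (\<eta> * ((1 - (1 - l i)) *\<^sub>R 0 + (1 - l i) *\<^sub>R 1))
        \<le> (1 - (1 - l i)) * exp (\<eta> * 0) + (1 - l i) * exp (\<eta> * 1)"
      using lb[OF i] eta by (intro convex_onD[OF convex_on_exp]) auto
    have "exp (- \<eta> * l i) = exp (-\<eta>) * exp (\<eta> * (1 - l i))"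
      by (subst exp_add[symmetric]) (simp add: algebra_simps)
    also have "\<dots> \<le> exp (-\<eta>) * (1 + (1 - l i) * (exp \<eta> - 1))"
      using c by (intro mult_left_mono) (auto simp: algebra_simps)
    finally show ?thesis .
  qed
  have Zle: "(\<Sum>i<d. p i * exp (- \<eta> * l i)) \<le> (\<Sum>i<d. p i * (exp (-\<eta>) * (1 + (1 - l i) * (exp \<eta> - 1))))"
    using pt pn by (intro sum_mono mult_left_mono) auto
  also have "\<dots> = (\<Sum>i<d. exp (-\<eta>) * p i + (exp (-\<eta>) * (exp \<eta> - 1)) * (p i * (1 - l i)))"
    by (rule sum.cong) (auto simp: algebra_simps)
  also have "\<dots> = exp (-\<eta>) * (\<Sum>i<d. p i) + (exp (-\<eta>) * (exp \<eta> - 1)) * m"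
    by (simp add: sum.distrib sum_distrib_left m_def)
  also have "\<dots> = exp (-\<eta>) * (1 + m * (exp \<eta> - 1))"
    by (simp add: ps algebra_simps)
  finally have Zle: "(\<Sum>i<d. p i * exp (- \<eta> * l i)) \<le> exp (-\<eta>) * (1 + m * (exp \<eta> - 1))" .
  have Zge: "exp (-\<eta>) \<le> (\<Sum>i<d. p i * exp (- \<eta> * l i))"
  proof -
    have "exp (-\<eta>) = (\<Sum>i<d. p i * exp (-\<eta>))" by (simp add: sum_distrib_right[symmetric] ps)
    also have "\<dots> \<le> (\<Sum>i<d. p i * exp (- \<eta> * l i))"
      using pn lb eta by (intro sum_mono mult_left_mono) auto
    finally show ?thesis .
  qed
  have Zpos: "0 < (\<Sum>i<d. p i * exp (- \<eta> * l i))" using Zge by (meson exp_gt_zero less_le_trans)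
  have pos2: "0 < 1 + m * (exp \<eta> - 1)" using m0 eta
    by (smt (verit) mult_nonneg_nonneg one_le_exp_iff)
  have "ln (\<Sum>i<d. p i * exp (- \<eta> * l i)) \<le> ln (exp (-\<eta>) * (1 + m * (exp \<eta> - 1)))"
    using Zle Zpos by simp
  also have "\<dots> = -\<eta> + ln (1 + m * (exp \<eta> - 1))" using pos2 by (simp add: ln_mult)
  also have "\<dots> \<le> -\<eta> + (\<eta> * m + \<eta>^2/8)"
    using Hoeffdings_lemma_aux[of \<eta> m] eta m0 by (simp add: mult.commute)
  also have "\<dots> = - \<eta> * (\<Sum>i<d. p i * l i) + \<eta>^2 / 8" by (simp add: mm algebra_simps)
  finally show ?thesis .
qed

lemma gibbs:
  fixes y v :: "nat \<Rightarrow> real"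
  assumes "\<And>i. i < d \<Longrightarrow> 0 < y i" "\<And>i. i < d \<Longrightarrow> 0 < v i"
    "(\<Sum>i<d. y i) = 1" "(\<Sum>i<d. v i) = 1"
  shows "0 \<le> (\<Sum>i<d. y i * ln (y i / v i))"
proof -
  have "(\<Sum>i<d. y i - v i) \<le> (\<Sum>i<d. y i * ln (y i / v i))"
  proof (rule sum_mono)
    fix i assume i: "i \<in> {..<d}"
    have yp: "y i > 0" "v i > 0" using assms i by auto
    have "ln (v i / y i) \<le> v i / y i - 1" using yp by (intro ln_le_minus_one) auto
    moreover have "ln (y i / v i) = - ln (v i / y i)" using yp by (simp add: ln_div)
    ultimately have "y i * (1 - v i / y i) \<le> y i * ln (y i / v i)"
      using yp by (intro mult_left_mono) auto
    thus "y i - v i \<le> y i * ln (y i / v i)" using yp by (simp add: algebra_simps)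
  qed
  thus ?thesis using assms by (simp add: sum_subtractf)
qed

lemma tangent:
  fixes x y v :: real
  assumes "0 < x" "0 < y" "0 < v"
  shows "x * ln (x / v) - y * ln (y / v) \<le> (x - y) * (ln (x / v) + 1)"
proof -
  have "ln (x / y) \<le> x / y - 1" using assms by (intro ln_le_minus_one) auto
  hence e: "y * ln (x / y) \<le> y * (x / y - 1)" using assms by (intro mult_left_mono) auto
  have e2: "y * (x / y - 1) = x - y" using assms by (simp add: field_simps)
  have eq: "ln (x / v) = ln x - ln v" "ln (y / v) = ln y - ln v" "ln (x/y) = ln x - ln y"
    using assms by (auto simp: ln_div)
  show ?thesis using e unfolding e2 eq by (simp add: algebra_simps)
qed

lemma pyth:
  fixes y q v :: "nat \<Rightarrow> real"
  assumes d: "d \<ge> 1" and a: "0 < \<alpha>"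
    and y: "is_arg_min (\<lambda>x. KL d x v) (\<lambda>x. x \<in> simplex_alpha \<alpha> d) y"
    and q: "q \<in> simplex_alpha \<alpha> d"
    and vp: "\<And>i. i < d \<Longrightarrow> 0 < v i" and vs: "(\<Sum>i<d. v i) = 1"
  shows "0 \<le> (\<Sum>i<d. q i * ln (y i / v i))"
proof -
  have ad: "\<alpha> / real d > 0" using a d by simp
  have yS: "y \<in> simplex_alpha \<alpha> d" using y by (simp add: is_arg_min_def)
  have ymin: "\<not> (KL d x v < KL d y v)" if "x \<in> simplex_alpha \<alpha> d" for x
    using y that by (auto simp: is_arg_min_def)
  have yb: "\<alpha> / real d \<le> y i \<and> y i \<le> 1" if "i < d" for i
    using yS that by (auto simp: simplex_alpha_def)
  have qb: "\<alpha> / real d \<le> q i \<and> q i \<le> 1" if "i < d" for i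
    using q that by (auto simp: simplex_alpha_def)
  have ys: "(\<Sum>i<d. y i) = 1" using yS by (auto simp: simplex_alpha_def Defs.simplex_def)
  have qs: "(\<Sum>i<d. q i) = 1" using q by (auto simp: simplex_alpha_def Defs.simplex_def)
  have ypos: "0 < y i" if "i < d" for i using yb[OF that] ad by linarith
  define x where "x = (\<lambda>lam i. y i + lam * (q i - y i))"
  define F where "F = (\<lambda>lam. \<Sum>i<d. (q i - y i) * ln (x lam i / v i))"
  have xb: "\<alpha> / real d \<le> x lam i \<and> x lam i \<le> 1" if "i < d" "0 \<le> lam" "lam \<le> 1" for i lam
  proof -
    have e: "x lam i = (1 - lam) * y i + lam * q i" by (simp add: x_def algebra_simps)
    have l1: "(1 - lam) * y i + lam * q i \<ge> (1 - lam) * (\<alpha> / real d) + lam * (\<alpha> / real d)"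
      using yb[OF that(1)] qb[OF that(1)] that by (intro add_mono mult_left_mono) auto
    have l2: "(1 - lam) * y i + lam * q i \<le> (1 - lam) * 1 + lam * 1"
      using yb[OF that(1)] qb[OF that(1)] that by (intro add_mono mult_left_mono) auto
    have "(1 - lam) * (\<alpha> / real d) + lam * (\<alpha> / real d) = \<alpha> / real d" by (simp only: distrib_right[symmetric]) simp
    moreover have "(1 - lam) * 1 + lam * 1 = (1::real)" by simp
    ultimately show ?thesis using e l1 l2 by linarith
  qed
  have xs: "(\<Sum>i<d. x lam i) = 1" for lam
    by (simp add: x_def sum.distrib sum_distrib_left[symmetric] sum_subtractf ys qs)
  have xS: "x lam \<in> simplex_alpha \<alpha> d" if "0 \<le> lam" "lam \<le> 1" for lam
  proof -
    have "\<forall>i<d. \<alpha> / real d \<le> x lam i \<and> x lam i \<le> 1" using xb that by blast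
    moreover have "\<forall>i<d. 0 \<le> x lam i \<and> x lam i \<le> 1" using xb that ad
      by (meson less_imp_le order_trans)
    ultimately show ?thesis using xs unfolding simplex_alpha_def Defs.simplex_def by blast
  qed
  have Fpos: "F lam \<ge> 0" if "0 < lam" "lam \<le> 1" for lam
  proof -
    have "0 \<le> KL d (x lam) v - KL d y v" using ymin[OF xS, of lam] that by simp
    also have "\<dots> = (\<Sum>i<d. x lam i * ln (x lam i / v i) - y i * ln (y i / v i))"
      by (simp add: KL_def sum_subtractf)
    also have "\<dots> \<le> (\<Sum>i<d. (x lam i - y i) * (ln (x lam i / v i) + 1))"
    proof (rule sum_mono)
      fix i assume i: "i \<in> {..<d}"
      have "0 < x lam i" using xb[of i lam] i that ad by auto
      thus "x lam i * ln (x lam i / v i) - y i * ln (y i / v i) \<le> (x lam i - y i) * (ln (x lam i / v i) + 1)"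
        using tangent ypos vp i by auto
    qed
    also have "\<dots> = (\<Sum>i<d. lam * ((q i - y i) * ln (x lam i / v i)) + lam * (q i - y i))"
      by (rule sum.cong) (auto simp: x_def algebra_simps)
    also have "\<dots> = lam * F lam + lam * (\<Sum>i<d. q i - y i)"
      by (simp add: F_def sum.distrib sum_distrib_left)
    also have "(\<Sum>i<d. q i - y i) = 0" by (simp add: sum_subtractf qs ys)
    finally have "0 \<le> lam * F lam" by simp
    thus ?thesis using that by (simp add: zero_le_mult_iff)
  qed
  have cont: "isCont F 0"
    unfolding F_def x_def using ypos vp
    by (intro continuous_intros) (auto, (metis less_irrefl)+)
  have lim: "(F \<longlongrightarrow> F 0) (at_right 0)"
    using cont unfolding isCont_def by (rule tendsto_within_subset) auto
  have ev: "eventually (\<lambda>lam. 0 \<le> F lam) (at_right 0)"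
  proof (rule eventually_mono[OF eventually_at_right_real[of "0::real" 1]])
    show "0 < (1::real)" by simp
    fix lam :: real assume "lam \<in> {0<..<1}" thus "0 \<le> F lam" using Fpos by auto
  qed
  have F0: "0 \<le> F 0" by (rule tendsto_lowerbound[OF lim ev]) simp
  have "F 0 = (\<Sum>i<d. q i * ln (y i / v i)) - (\<Sum>i<d. y i * ln (y i / v i))"
    by (simp add: F_def x_def algebra_simps sum_subtractf)
  moreover have "0 \<le> (\<Sum>i<d. y i * ln (y i / v i))"
    using gibbs[of d y v] ypos vp ys vs by auto
  ultimately show ?thesis using F0 by linarith
qed

theorem mainTheorem3:
  fixes d :: nat and \<alpha> \<eta> :: real
    and p :: "nat \<Rightarrow> nat \<Rightarrow> real"   (* p t = predicted weight vector at round t *)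
    and l :: "nat \<Rightarrow> nat \<Rightarrow> real"   (* l t = loss vector at round t *)
    and q :: "nat \<Rightarrow> real" and t :: nat
  assumes "d \<ge> 1"
    and "0 < \<alpha>" and "\<alpha> < 1"
    and "\<eta> > 0"
    and "\<And>s i. s \<ge> 1 \<Longrightarrow> i < d \<Longrightarrow> 0 \<le> l s i \<and> l s i \<le> 1"
    and "p 1 = (\<lambda>i. 1 / real d)"
    and "\<And>s. s \<ge> 1 \<Longrightarrow>
           is_arg_min (\<lambda>x. KL d x (share_update d \<eta> (p s) (l s)))
                      (\<lambda>x. x \<in> simplex_alpha \<alpha> d) (p (s + 1))"
    and "t \<ge> 1"
    and "q \<in> simplex_alpha \<alpha> d"
  shows "(\<Sum>i<d. (p t i - q i) * l t i)
           \<le> 1 / \<eta> * (\<Sum>i<d. q i * ln (p (t + 1) i / p t i)) + \<eta> / 8"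
proof -
  note d = assms(1) and a = assms(2,3) and eta = assms(4) and lb = assms(5)
    and p1 = assms(6) and am = assms(7) and t = assms(8) and q = assms(9)
  have ad: "\<alpha> / real d > 0" using a d by simp
  have pS: "p s \<in> simplex_alpha \<alpha> d" if "s \<ge> 1" for s
  proof (cases "s = 1")
    case True
    have "\<alpha> / real d \<le> 1 / real d" using a d by (simp add: divide_right_mono)
    moreover have "1 / real d \<le> 1" using d by simp
    ultimately show ?thesis using True p1 d
      by (auto simp: simplex_alpha_def Defs.simplex_def)
  next
    case False
    define s' where "s' = s - 1"
    have s: "s = s' + 1" "s' \<ge> 1" using that False by (auto simp: s'_def)
    show ?thesis using am[OF s(2)] s by (simp add: is_arg_min_def)
  qed
  define P where "P = p t"
  define L where "L = l t"
  define Z where "Z = (\<Sum>i<d. P i * exp (- \<eta> * L i))"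
  define v where "v = share_update d \<eta> P L"
  have Pb: "\<alpha> / real d \<le> P i \<and> P i \<le> 1" if "i < d" for i
    using pS[OF t] that by (auto simp: simplex_alpha_def P_def)
  have Ppos: "0 < P i" if "i < d" for i using Pb[OF that] ad by linarith
  have Ps: "(\<Sum>i<d. P i) = 1" using pS[OF t] by (auto simp: simplex_alpha_def Defs.simplex_def P_def)
  have ne: "{..<d} \<noteq> {}" using d by (simp add: lessThan_empty_iff)
  have Zpos: "Z > 0" unfolding Z_def
    using Ppos ne by (intro sum_pos) auto
  have vdef: "v i = P i * exp (- \<eta> * L i) / Z" for i by (simp add: v_def share_update_def Z_def)
  have vpos: "0 < v i" if "i < d" for i using Ppos[OF that] Zpos by (simp add: vdef)
  have vs: "(\<Sum>i<d. v i) = 1" using Zpos by (simp add: vdef sum_divide_distrib[symmetric] Z_def)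
  have lnv: "ln (v i / P i) = - \<eta> * L i - ln Z" if "i < d" for i
    using Ppos[OF that] Zpos by (simp add: vdef ln_div)
  have py: "0 \<le> (\<Sum>i<d. q i * ln (p (t+1) i / v i))"
    using pyth[OF d a(1) am[OF t, folded P_def L_def, folded v_def] q vpos vs] by simp
  have P1pos: "0 < p (t+1) i" if "i < d" for i
  proof -
    have "\<alpha> / real d \<le> p (t+1) i" using pS[of "t+1"] that by (auto simp: simplex_alpha_def)
    thus ?thesis using ad by linarith
  qed
  have qs: "(\<Sum>i<d. q i) = 1" using q by (auto simp: simplex_alpha_def Defs.simplex_def)
  have split: "(\<Sum>i<d. q i * ln (p (t + 1) i / P i))
     = (\<Sum>i<d. q i * ln (p (t+1) i / v i)) + (\<Sum>i<d. q i * ln (v i / P i))"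
  proof -
    have "(\<Sum>i<d. q i * ln (p (t + 1) i / P i)) = (\<Sum>i<d. q i * ln (p (t+1) i / v i) + q i * ln (v i / P i))"
    proof (rule sum.cong)
      fix i assume i: "i \<in> {..<d}"
      then show "q i * ln (p (t + 1) i / P i) = q i * ln (p (t+1) i / v i) + q i * ln (v i / P i)"
        using P1pos[of i] vpos[of i] Ppos[of i] by (simp add: ln_div algebra_simps)
    qed simp
    thus ?thesis by (simp add: sum.distrib)
  qed
  have sec: "(\<Sum>i<d. q i * ln (v i / P i)) = - \<eta> * (\<Sum>i<d. q i * L i) - ln Z"
  proof -
    have "(\<Sum>i<d. q i * ln (v i / P i)) = (\<Sum>i<d. q i * (- \<eta> * L i - ln Z))"
      using lnv by (intro sum.cong) auto
    also have "\<dots> = - \<eta> * (\<Sum>i<d. q i * L i) - ln Z * (\<Sum>i<d. q i)"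
      by (simp add: algebra_simps sum_subtractf sum_distrib_left sum_distrib_right)
    finally show ?thesis using qs by simp
  qed
  have H: "ln Z \<le> - \<eta> * (\<Sum>i<d. P i * L i) + \<eta>^2 / 8"
    unfolding Z_def using hoeff[OF eta, of d L P] lb[OF t] Ppos Ps by (auto simp: L_def less_imp_le)
  have main: "\<eta> * (\<Sum>i<d. (P i - q i) * L i) \<le> (\<Sum>i<d. q i * ln (p (t + 1) i / P i)) + \<eta>^2 / 8"
  proof -
    have "(\<Sum>i<d. (P i - q i) * L i) = (\<Sum>i<d. P i * L i) - (\<Sum>i<d. q i * L i)"
      by (simp add: algebra_simps sum_subtractf)
    hence "\<eta> * (\<Sum>i<d. (P i - q i) * L i) = \<eta> * (\<Sum>i<d. P i * L i) - \<eta> * (\<Sum>i<d. q i * L i)"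
      by (simp add: right_diff_distrib)
    thus ?thesis using split sec H py by linarith
  qed
  have "(\<Sum>i<d. (P i - q i) * L i) \<le> ((\<Sum>i<d. q i * ln (p (t + 1) i / P i)) + \<eta>^2 / 8) / \<eta>"
    using main eta by (simp add: pos_le_divide_eq mult.commute)
  also have "\<dots> = 1 / \<eta> * (\<Sum>i<d. q i * ln (p (t + 1) i / P i)) + \<eta> / 8"
    using eta by (simp add: field_simps power2_eq_square)
  finally show ?thesis by (simp add: P_def L_def)
qed

end
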